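(* In the setting described in the context, suppose there is a compact interval $\Delta\subset\mathbb{R}$ such that for every $n\in\mathbb{N}_0$: (a) the polynomial $p_n$ has exactly $n$ simple zeros, all lying inside $\Delta$; (b) the zeros of $p_n$ and $p_{n+1}$ interlace. Then the matrix $J$ satisfies $\sup_{|i-j|\le R}|J_{i,j}|<\infty$ for every $R\ge0$.
   Context: Let $r\ge1$ and let $\mu_1,\dots,\mu_r$ be positive Borel measures on $\mathbb{R}$ with all moments finite, forming a perfect system: for every $\vec n\in\mathbb{N}_0^r$ there is a monic polynomial $P_{\vec n}$ of degree $|\vec n|=n_1+\dots+n_r$ with $\int x^kP_{\vec n}\,d\mu_j=0$ for $0\le k\le n_j-1$, $1\le j\le r$. Fix a path $(\vec n_\ell)_{\ell\ge0}$ with $|\vec n_\ell|=\ell$ and $\vec n_{\ell+1}=\vec n_\ell+\vec e_{i_\ell}$ ($\vec e_j$ the $j$-th unit vector, $i_\ell\in\{1,\dots,r\}$), and set $p_\ell=P_{\vec n_\ell}$. The matrix $J=[J_{\ell,k}]_{\ell,k\ge0}$ is defined by $xp_\ell=\sum_{k=0}^{\ell+1}J_{\ell,k}p_k$, with $J_{\ell,k}=0$ for $k>\ell+1$. *)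

theory Defs
  imports "HOL-Probability.Probability" "HOL-Computational_Algebra.Polynomial"
begin

text \<open>Multi-indices are functions nat => nat; only the components 1..r matter.\<close>

definition mi_size :: "nat \<Rightarrow> (nat \<Rightarrow> nat) \<Rightarrow> nat" where
  "mi_size r n = (\<Sum>j=1..r. n j)"

definition mop_typeII :: "nat \<Rightarrow> (nat \<Rightarrow> real measure) \<Rightarrow> (nat \<Rightarrow> nat) \<Rightarrow> real poly \<Rightarrow> bool" where
  "mop_typeII r \<mu> n P \<longleftrightarrow>
     lead_coeff P = 1 \<and> degree P = mi_size r n \<and>
     (\<forall>j\<in>{1..r}. \<forall>k<n j. (\<integral>x. x ^ k * poly P x \<partial>(\<mu> j)) = 0)"

definition moment_measure :: "real measure \<Rightarrow> bool" where
  "moment_measure M \<longleftrightarrow> sets M = sets borel \<and> (\<forall>k::nat. integrable M (\<lambda>x. x ^ k))"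

text \<open>The path: n_l(j) = number of steps k < l in direction j, so n_0 = 0 and
  n_(l+1) = n_l + e_(i l).\<close>
definition path_index :: "(nat \<Rightarrow> nat) \<Rightarrow> nat \<Rightarrow> (nat \<Rightarrow> nat)" where
  "path_index i l = (\<lambda>j. card {k. k < l \<and> i k = j})"

definition zeros_list :: "real poly \<Rightarrow> real list" where
  "zeros_list p = sorted_list_of_set {x. poly p x = 0}"

definition simple_zeros_in :: "real poly \<Rightarrow> nat \<Rightarrow> real set \<Rightarrow> bool" where
  "simple_zeros_in p n D \<longleftrightarrow> p \<noteq> 0 \<and> card {x. poly p x = 0} = n \<and>
     (\<forall>x. poly p x = 0 \<longrightarrow> order x p = 1 \<and> x \<in> D)"

definition interlace :: "real poly \<Rightarrow> real poly \<Rightarrow> bool" where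
  "interlace p q \<longleftrightarrow> length (zeros_list q) = length (zeros_list p) + 1 \<and>
     (\<forall>k < length (zeros_list p).
        zeros_list q ! k < zeros_list p ! k \<and> zeros_list p ! k < zeros_list q ! Suc k)"

end

theory Submission
  imports Defs "HOL-Computational_Algebra.Polynomial_FPS"
begin

unbundle no vec_syntax
unbundle fps_syntax



definition nrm :: "nat \<Rightarrow> real \<Rightarrow> real fps \<Rightarrow> real" where
  "nrm S \<rho> F = (\<Sum>s\<le>S. \<bar>F $ s\<bar> * \<rho> ^ s)"

lemma nrm_nonneg: "0 \<le> \<rho> \<Longrightarrow> 0 \<le> nrm S \<rho> F"
  unfolding nrm_def by (intro sum_nonneg) auto

lemma nrm_one: "nrm S \<rho> 1 = 1"
  unfolding nrm_def by (induction S) auto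

lemma nrm_coeff: "0 \<le> \<rho> \<Longrightarrow> t \<le> S \<Longrightarrow> \<bar>F $ t\<bar> * \<rho> ^ t \<le> nrm S \<rho> F"
  unfolding nrm_def by (rule member_le_sum[where f="\<lambda>s. \<bar>F $ s\<bar> * \<rho> ^ s"]) auto

lemma nrm_mult:
  assumes "0 \<le> \<rho>"
  shows "nrm S \<rho> (F * G) \<le> nrm S \<rho> F * nrm S \<rho> G"
proof -
  define a where "a i = \<bar>F $ i\<bar> * \<rho> ^ i" for i
  define b where "b i = \<bar>G $ i\<bar> * \<rho> ^ i" for i
  have a0: "0 \<le> a i" "0 \<le> b i" for i using assms by (auto simp: a_def b_def)
  have "nrm S \<rho> (F * G) = (\<Sum>s\<le>S. \<bar>\<Sum>i\<le>s. F $ i * G $ (s - i)\<bar> * \<rho> ^ s)"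
    unfolding nrm_def fps_mult_nth atLeast0AtMost ..
  also have "\<dots> \<le> (\<Sum>s\<le>S. \<Sum>i\<le>s. a i * b (s - i))"
  proof (rule sum_mono)
    fix s assume "s \<in> {..S}"
    have "\<bar>\<Sum>i\<le>s. F $ i * G $ (s - i)\<bar> * \<rho> ^ s \<le> (\<Sum>i\<le>s. \<bar>F $ i * G $ (s - i)\<bar>) * \<rho> ^ s"
      using assms by (intro mult_right_mono sum_abs) auto
    also have "\<dots> = (\<Sum>i\<le>s. a i * b (s - i))"
      unfolding sum_distrib_right a_def b_def
      by (intro sum.cong refl) (auto simp: abs_mult power_add[symmetric])
    finally show "\<bar>\<Sum>i\<le>s. F $ i * G $ (s - i)\<bar> * \<rho> ^ s \<le> (\<Sum>i\<le>s. a i * b (s - i))" .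
  qed
  also have "\<dots> = (\<Sum>(i,j)\<in>{(i,j). i+j \<le> S}. a i * b j)"
    by (rule sum.triangle_reindex_eq[symmetric])
  also have "\<dots> \<le> (\<Sum>(i,j)\<in>{..S} \<times> {..S}. a i * b j)"
    by (rule sum_mono2) (auto simp: a0)
  also have "\<dots> = (\<Sum>i\<le>S. a i) * (\<Sum>j\<le>S. b j)"
    by (simp add: sum_product sum.cartesian_product)
  finally show ?thesis unfolding nrm_def a_def b_def .
qed

lemma nrm_prod:
  assumes "0 \<le> \<rho>" "finite A"
  shows "nrm S \<rho> (\<Prod>x\<in>A. f x) \<le> (\<Prod>x\<in>A. nrm S \<rho> (f x))"
  using assms(2)
proof (induction A rule: finite_induct)
  case empty then show ?case by (simp add: nrm_one)
next
  case (insert x A)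
  have "nrm S \<rho> (\<Prod>x\<in>insert x A. f x) = nrm S \<rho> (f x * (\<Prod>x\<in>A. f x))"
    using insert by simp
  also have "\<dots> \<le> nrm S \<rho> (f x) * nrm S \<rho> (\<Prod>x\<in>A. f x)" by (rule nrm_mult[OF assms(1)])
  also have "\<dots> \<le> nrm S \<rho> (f x) * (\<Prod>x\<in>A. nrm S \<rho> (f x))"
    by (intro mult_left_mono insert.IH nrm_nonneg assms(1))
  finally show ?case using insert by simp
qed

definition gp :: "real \<Rightarrow> real fps" where "gp y = Abs_fps (\<lambda>s. y ^ s)"

lemma gp_inv: "inverse (1 - fps_const y * fps_X) = gp y"
proof (rule fps_inverse_unique, rule fps_ext)
  fix n show "((1 - fps_const y * fps_X) * gp y) $ n = (1::real fps) $ n"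
    by (cases n) (auto simp: algebra_simps gp_def)
qed

lemma half_geom: "(\<Sum>k<n. (1/2::real) ^ k) = 2 - 2 * (1/2) ^ n"
  by (induction n) auto

lemma geom_bound:
  assumes "0 \<le> q" "q \<le> 1/2"
  shows "(\<Sum>k<n. (q::real) ^ k) \<le> 2"
proof -
  have "(\<Sum>k<n. q ^ k) \<le> (\<Sum>k<n. (1/2::real) ^ k)"
    by (intro sum_mono power_mono assms) 
  also have "\<dots> \<le> 2" unfolding half_geom by simp
  finally show ?thesis .
qed

lemma nrm_gp:
  assumes "0 \<le> \<rho>" "\<bar>y\<bar> * \<rho> \<le> 1/2"
  shows "nrm S \<rho> (gp y) \<le> 2"
proof -
  have "nrm S \<rho> (gp y) = (\<Sum>k<Suc S. (\<bar>y\<bar> * \<rho>) ^ k)"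
    unfolding nrm_def gp_def lessThan_Suc_atMost
    by (simp add: power_abs power_mult_distrib)
  also have "\<dots> \<le> 2" by (rule geom_bound) (use assms in auto)
  finally show ?thesis .
qed

lemma nrm_fac:
  assumes "0 \<le> \<rho>" "\<bar>y\<bar> * \<rho> \<le> 1/2"
  shows "nrm S \<rho> ((1 - fps_const x * fps_X) * gp y) \<le> 1 + 2 * \<rho> * \<bar>y - x\<bar>"
proof (cases S)
  case 0 then show ?thesis using assms by (simp add: nrm_def gp_def)
next
  case (Suc S')
  have nth: "((1 - fps_const x * fps_X) * gp y) $ Suc s = (y - x) * y ^ s" for s
    by (simp add: gp_def algebra_simps)
  have "nrm S \<rho> ((1 - fps_const x * fps_X) * gp y)
     = 1 + (\<Sum>s<Suc S'. \<bar>(y - x) * y ^ s\<bar> * \<rho> ^ Suc s)"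
    unfolding nrm_def Suc sum.atMost_Suc_shift lessThan_Suc_atMost nth
    by (simp add: gp_def)
  also have "(\<Sum>s<Suc S'. \<bar>(y - x) * y ^ s\<bar> * \<rho> ^ Suc s)
      = \<rho> * \<bar>y - x\<bar> * (\<Sum>s<Suc S'. (\<bar>y\<bar> * \<rho>) ^ s)"
    unfolding sum_distrib_left
    by (intro sum.cong refl) (simp add: abs_mult power_abs power_mult_distrib mult_ac)
  also have "\<dots> \<le> \<rho> * \<bar>y - x\<bar> * 2"
    by (intro mult_left_mono geom_bound) (use assms in auto)
  finally show ?thesis by simp
qed



lemma prod_lin_dvd:
  fixes p :: "real poly"
  assumes "finite Z" "\<And>z. z \<in> Z \<Longrightarrow> poly p z = 0"
  shows "(\<Prod>z\<in>Z. [:-z, 1:]) dvd p"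
  using assms
proof (induction Z rule: finite_induct)
  case empty then show ?case by simp
next
  case (insert z Z)
  from insert obtain q where q: "p = (\<Prod>z\<in>Z. [:-z, 1:]) * q"
    by (auto elim!: dvdE)
  have "poly (\<Prod>z\<in>Z. [:-z, 1:]) z \<noteq> 0"
    using insert(1,2) by (auto simp: poly_prod prod_zero_iff)
  moreover have "poly p z = 0" using insert by auto
  ultimately have "poly q z = 0" using q by simp
  then obtain q' where qq: "q = [:-z, 1:] * q'" by (auto simp: poly_eq_0_iff_dvd elim!: dvdE)
  have "p = ([:-z, 1:] * (\<Prod>z\<in>Z. [:-z, 1:])) * q'"
    using q qq by (simp only: mult_ac)
  then have "p = (\<Prod>z\<in>insert z Z. [:-z, 1:]) * q'" using insert(1,2) by (metis prod.insert)
  then show ?case by simp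
qed

lemma poly_eq_prod_roots:
  fixes p :: "real poly"
  assumes "p \<noteq> 0" "lead_coeff p = 1" "card {x. poly p x = 0} = degree p"
  shows "p = (\<Prod>z\<in>{x. poly p x = 0}. [:-z, 1:])"
proof -
  let ?Z = "{x. poly p x = 0}"
  have fin: "finite ?Z" using poly_roots_finite[OF assms(1)] .
  obtain q where q: "p = (\<Prod>z\<in>?Z. [:-z, 1:]) * q"
    using prod_lin_dvd[OF fin] by (auto elim!: dvdE)
  have q0: "q \<noteq> 0" using q assms(1) by auto
  have nz: "(\<Prod>z\<in>?Z. [:-z, 1:]) \<noteq> (0::real poly)" by (simp add: fin)
  have dprod: "degree (\<Prod>z\<in>?Z. [:-z, 1:]) = card ?Z"
    by (subst degree_prod_eq_sum_degree) (auto simp: fin)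
  have "degree p = degree (\<Prod>z\<in>?Z. [:-z, 1:]) + degree q"
    using q q0 nz by (metis degree_mult_eq)
  then have "degree q = 0" using dprod assms(3) by simp
  moreover have "lead_coeff q = 1"
  proof -
    have "lead_coeff (\<Prod>z\<in>?Z. [:-z, 1:]) = 1" by (simp add: lead_coeff_prod)
    moreover have "lead_coeff p = lead_coeff (\<Prod>z\<in>?Z. [:-z, 1:]) * lead_coeff q"
      using q lead_coeff_mult by metis
    ultimately have "lead_coeff p = lead_coeff q" by simp
    then show ?thesis using assms(2) by simp
  qed
  ultimately have "q = 1" by (metis degree_0_id one_pCons)
  then show ?thesis using q by simp
qed

lemma reflect_lin: "reflect_poly [:-z, 1:] = [:1, -(z::real):]"
  by (cases "z = 0") (simp_all add: reflect_poly_def)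

lemma fps_lin: "fps_of_poly [:1, -z:] = 1 - fps_const (z::real) * fps_X"
proof (rule fps_ext)
  fix n show "fps_of_poly [:1, -z:] $ n = (1 - fps_const (z::real) * fps_X) $ n"
  proof (cases n)
    case (Suc m) then show ?thesis by (cases m) auto
  qed simp
qed

lemma zeros_list_props:
  fixes p :: "real poly"
  assumes "p \<noteq> 0"
  shows "sorted (zeros_list p)" "distinct (zeros_list p)"
        "set (zeros_list p) = {x. poly p x = 0}"
        "length (zeros_list p) = card {x. poly p x = 0}"
  using poly_roots_finite[OF assms] by (auto simp: zeros_list_def)

lemma Q_prod:
  fixes p :: "real poly"
  assumes "p \<noteq> 0" "lead_coeff p = 1" "card {x. poly p x = 0} = degree p"
  shows "fps_of_poly (reflect_poly p)
    = (\<Prod>k<length (zeros_list p). 1 - fps_const (zeros_list p ! k) * fps_X)"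
proof -
  let ?xs = "zeros_list p"
  have "p = (\<Prod>z\<in>set ?xs. [:-z, 1:])"
    using poly_eq_prod_roots[OF assms] zeros_list_props(3)[OF assms(1)] by simp
  also have "\<dots> = (\<Prod>k<length ?xs. [:-(?xs ! k), 1:])"
  proof -
    have "set ?xs = (\<lambda>k. ?xs ! k) ` {..<length ?xs}" by (auto simp: set_conv_nth)
    moreover have "inj_on (\<lambda>k. ?xs ! k) {..<length ?xs}"
      using zeros_list_props(2)[OF assms(1)] by (auto simp: inj_on_def nth_eq_iff_index_eq)
    ultimately show ?thesis by (simp add: prod.reindex)
  qed
  finally have "fps_of_poly (reflect_poly p) = fps_of_poly (reflect_poly (\<Prod>k<length ?xs. [:-(?xs ! k), 1:]))"
    by simp
  also have "\<dots> = (\<Prod>k<length ?xs. 1 - fps_const (?xs ! k) * fps_X)"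
    by (simp add: reflect_poly_prod fps_of_poly_prod reflect_lin fps_lin)
  finally show ?thesis .
qed

definition T :: "nat \<Rightarrow> real poly \<Rightarrow> real fps" where
  "T m f = Abs_fps (\<lambda>s. if s \<le> m then coeff f (m - s) else 0)"

lemma T_sum: "T m (\<Sum>k\<in>A. smult (c k) (f k)) = (\<Sum>k\<in>A. fps_const (c k) * T m (f k))"
  by (rule fps_ext) (simp add: T_def fps_sum_nth coeff_sum)

lemma T_deg:
  assumes "degree f \<le> m"
  shows "T m f = fps_X ^ (m - degree f) * fps_of_poly (reflect_poly f)"
proof (rule fps_ext)
  fix s
  show "T m f $ s = (fps_X ^ (m - degree f) * fps_of_poly (reflect_poly f)) $ s"
    using assms by (auto simp: T_def fps_X_power_mult_nth coeff_reflect_poly coeff_eq_0)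
qed

lemma T_x: "T (Suc l) ([:0, 1:] * f) = T l f"
  by (rule fps_ext) (auto simp: T_def Suc_diff_le)



lemma pidx_Suc: "path_index i (Suc n) j = path_index i n j + (if i n = j then 1 else 0)"
proof -
  have "{k. k < Suc n \<and> i k = j} = {k. k < n \<and> i k = j} \<union> (if i n = j then {n} else {})"
    by (auto simp: less_Suc_eq)
  then show ?thesis unfolding path_index_def by (auto simp: card_insert_if)
qed

lemma mi_size_path:
  assumes "\<And>l. i l \<in> {1..r}"
  shows "mi_size r (path_index i n) = n"
proof (induction n)
  case 0 then show ?case by (simp add: mi_size_def path_index_def)
next
  case (Suc n)
  have "mi_size r (path_index i (Suc n)) = (\<Sum>j=1..r. path_index i n j) + (\<Sum>j=1..r. if i n = j then 1 else 0)"
    unfolding mi_size_def pidx_Suc sum.distrib ..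
  also have "(\<Sum>j=1..r. if i n = j then 1 else 0) = (1::nat)"
    using assms[of n] by (simp add: sum.delta')
  finally show ?case using Suc by (simp add: mi_size_def)
qed

lemma sum_flip: "(\<Sum>k\<le>m. g k) = (\<Sum>j\<le>m. g (m - j))"
  for g :: "nat \<Rightarrow> real"
  by (rule sum.reindex_bij_witness[where i="\<lambda>j. m - j" and j="\<lambda>k. m - k"]) auto



theorem theorem3:
  fixes r :: nat and \<mu> :: "nat \<Rightarrow> real measure"
    and P :: "(nat \<Rightarrow> nat) \<Rightarrow> real poly"
    and i :: "nat \<Rightarrow> nat" and J :: "nat \<Rightarrow> nat \<Rightarrow> real"
    and a b :: real
  assumes r: "r \<ge> 1"
    and meas: "\<And>j. j \<in> {1..r} \<Longrightarrow> moment_measure (\<mu> j)"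
    and perfect: "\<And>n. mop_typeII r \<mu> n (P n)"
    and path: "\<And>l. i l \<in> {1..r}"
    and J_exp: "\<And>l. [:0, 1:] * P (path_index i l)
                 = (\<Sum>k\<le>Suc l. smult (J l k) (P (path_index i k)))"
    and J_zero: "\<And>l k. k > Suc l \<Longrightarrow> J l k = 0"
    and ab: "a \<le> b"
    and zeros: "\<And>n. simple_zeros_in (P (path_index i n)) n {a..b}"
    and inter: "\<And>n. interlace (P (path_index i n)) (P (path_index i (Suc n)))"
  shows "\<forall>R::nat. bdd_above {\<bar>J l k\<bar> | l k. \<bar>int l - int k\<bar> \<le> int R}"
proof -
  define p where "p n = P (path_index i n)" for n
  have deg: "degree (p n) = n" for n
    using perfect[of "path_index i n"] mi_size_path[OF path] by (simp add: p_def mop_typeII_def)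
  have lc: "lead_coeff (p n) = 1" for n
    using perfect[of "path_index i n"] unfolding p_def mop_typeII_def by blast
  have pnz: "p n \<noteq> 0" and card: "card {x. poly (p n) x = 0} = n"
    and inD: "\<And>x. poly (p n) x = 0 \<Longrightarrow> x \<in> {a..b}" for n
    using zeros[of n] by (auto simp: p_def simple_zeros_in_def)
  define xs where "xs n = zeros_list (p n)" for n
  have len: "length (xs n) = n" for n
    using zeros_list_props(4)[OF pnz] card by (simp add: xs_def)
  have mem: "k < n \<Longrightarrow> xs n ! k \<in> {a..b}" for n k
    using zeros_list_props(3)[OF pnz, of n] len[of n] inD[of n] nth_mem[of k "xs n"]
    by (auto simp: xs_def)
  define Q where "Q n = fps_of_poly (reflect_poly (p n))" for n
  have Q0: "Q n $ 0 = 1" for n by (simp add: Q_def lc)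
  have Qprod: "Q n = (\<Prod>k<n. 1 - fps_const (xs n ! k) * fps_X)" for n
    using Q_prod[OF pnz lc, of n] card deg len by (simp add: Q_def xs_def)
  define M where "M = \<bar>a\<bar> + \<bar>b\<bar> + 1"
  define \<rho> where "\<rho> = 1 / (2 * M)"
  have Mpos: "M > 0" by (simp add: M_def add_pos_nonneg)
  have \<rho>pos: "\<rho> > 0" using Mpos by (simp add: \<rho>_def)
  have zb: "\<bar>z\<bar> * \<rho> \<le> 1/2" if "z \<in> {a..b}" for z
  proof -
    have "\<bar>z\<bar> \<le> M" using that by (auto simp: M_def)
    then have "\<bar>z\<bar> * \<rho> \<le> M * \<rho>" using \<rho>pos by (intro mult_right_mono) auto
    also have "M * \<rho> = 1/2" using Mpos by (simp add: \<rho>_def)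
    finally show ?thesis .
  qed
  define K0 where "K0 = 2 * exp (2 * \<rho> * (b - a))"
  have K0pos: "K0 > 0" by (simp add: K0_def)
  have ratio: "nrm S \<rho> (Q n * inverse (Q (Suc n))) \<le> K0" for S n
  proof -
    let ?x = "xs n" and ?y = "xs (Suc n)"
    have lt1: "?y ! k < ?x ! k" and lt2: "?x ! k < ?y ! Suc k" if "k < n" for k
      using inter[of n] that len by (auto simp: interlace_def xs_def p_def)
    have dpos: "0 \<le> \<rho> * (?x ! k - ?y ! k)" if "k < n" for k
      using lt1[OF that] \<rho>pos by (intro mult_nonneg_nonneg) auto
    have "inverse (Q (Suc n)) = (\<Prod>k<Suc n. gp (?y ! k))"
      unfolding Qprod[of "Suc n"] inverse_prod_fps gp_inv ..
    then have "Q n * inverse (Q (Suc n))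
        = (\<Prod>k<n. (1 - fps_const (?x ! k) * fps_X) * gp (?y ! k)) * gp (?y ! n)"
      unfolding Qprod[of n] by (simp add: prod.distrib mult_ac)
    then have "nrm S \<rho> (Q n * inverse (Q (Suc n)))
        \<le> nrm S \<rho> (\<Prod>k<n. (1 - fps_const (?x ! k) * fps_X) * gp (?y ! k)) * nrm S \<rho> (gp (?y ! n))"
      using nrm_mult[of \<rho>] \<rho>pos by simp
    also have "\<dots> \<le> (\<Prod>k<n. 1 + 2 * \<rho> * (?x ! k - ?y ! k)) * 2"
    proof (rule mult_mono)
      have "nrm S \<rho> (\<Prod>k<n. (1 - fps_const (?x ! k) * fps_X) * gp (?y ! k))
          \<le> (\<Prod>k<n. nrm S \<rho> ((1 - fps_const (?x ! k) * fps_X) * gp (?y ! k)))"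
        by (rule nrm_prod) (use \<rho>pos in auto)
      also have "\<dots> \<le> (\<Prod>k<n. 1 + 2 * \<rho> * (?x ! k - ?y ! k))"
      proof (rule prod_mono)
        fix k assume k: "k \<in> {..<n}"
        have "nrm S \<rho> ((1 - fps_const (?x ! k) * fps_X) * gp (?y ! k))
            \<le> 1 + 2 * \<rho> * \<bar>?y ! k - ?x ! k\<bar>"
          by (rule nrm_fac) (use \<rho>pos zb mem[of k "Suc n"] k in auto)
        also have "\<bar>?y ! k - ?x ! k\<bar> = ?x ! k - ?y ! k" using lt1[of k] k by simp
        finally show "0 \<le> nrm S \<rho> ((1 - fps_const (?x ! k) * fps_X) * gp (?y ! k)) \<and>
            nrm S \<rho> ((1 - fps_const (?x ! k) * fps_X) * gp (?y ! k)) \<le> 1 + 2 * \<rho> * (?x ! k - ?y ! k)"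
          using nrm_nonneg \<rho>pos by auto
      qed
      finally show "nrm S \<rho> (\<Prod>k<n. (1 - fps_const (?x ! k) * fps_X) * gp (?y ! k))
          \<le> (\<Prod>k<n. 1 + 2 * \<rho> * (?x ! k - ?y ! k))" .
      show "nrm S \<rho> (gp (?y ! n)) \<le> 2"
        by (rule nrm_gp) (use \<rho>pos zb mem[of n "Suc n"] in auto)
      show "0 \<le> nrm S \<rho> (gp (?y ! n))" using nrm_nonneg \<rho>pos by auto
      show "0 \<le> (\<Prod>k<n. 1 + 2 * \<rho> * (?x ! k - ?y ! k))"
        using dpos by (intro prod_nonneg) (auto intro!: add_nonneg_nonneg)
    qed
    also have "(\<Prod>k<n. 1 + 2 * \<rho> * (?x ! k - ?y ! k)) \<le> (\<Prod>k<n. exp (2 * \<rho> * (?x ! k - ?y ! k)))"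
    proof (rule prod_mono)
      fix k assume "k \<in> {..<n}"
      then have d: "0 \<le> 2 * \<rho> * (?x ! k - ?y ! k)" using dpos by (simp add: mult.assoc)
      show "0 \<le> 1 + 2 * \<rho> * (?x ! k - ?y ! k) \<and> 1 + 2 * \<rho> * (?x ! k - ?y ! k) \<le> exp (2 * \<rho> * (?x ! k - ?y ! k))"
        using d exp_ge_add_one_self_aux[OF d] by auto
    qed
    also have "\<dots> = exp (2 * \<rho> * (\<Sum>k<n. ?x ! k - ?y ! k))"
      by (simp add: exp_sum sum_distrib_left)
    also have "\<dots> \<le> exp (2 * \<rho> * (b - a))"
    proof -
      have "(\<Sum>k<n. ?x ! k - ?y ! k) \<le> (\<Sum>k<n. ?y ! Suc k - ?y ! k)"
        using lt2 by (intro sum_mono) (simp add: less_imp_le)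
      also have "\<dots> = ?y ! n - ?y ! 0" by (rule sum_lessThan_telescope)
      also have "\<dots> \<le> b - a" using mem[of n "Suc n"] mem[of 0 "Suc n"] by auto
      finally show ?thesis using \<rho>pos by simp
    qed
    finally show ?thesis by (simp add: K0_def mult_ac)
  qed
  have chain: "nrm S \<rho> (Q n * inverse (Q (n + d))) \<le> K0 ^ d" for S n d
  proof (induction d)
    case 0
    have "Q n * inverse (Q n) = 1" by (rule inverse_mult_eq_1') (simp add: Q0)
    then show ?case by (simp add: nrm_one)
  next
    case (Suc d)
    have "Q n * inverse (Q (n + Suc d))
        = (Q n * inverse (Q (n + d))) * (Q (n + d) * inverse (Q (Suc (n + d))))"
    proof -
      have "inverse (Q (n + d)) * Q (n + d) = 1" by (rule inverse_mult_eq_1) (simp add: Q0)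
      then show ?thesis by (simp add: mult.assoc)
    qed
    also have "nrm S \<rho> \<dots> \<le> nrm S \<rho> (Q n * inverse (Q (n + d))) * nrm S \<rho> (Q (n + d) * inverse (Q (Suc (n + d))))"
      by (rule nrm_mult) (use \<rho>pos in simp)
    also have "\<dots> \<le> K0 ^ d * K0"
      by (intro mult_mono Suc.IH ratio nrm_nonneg) (use \<rho>pos K0pos in auto)
    finally show ?case by (simp add: mult_ac)
  qed
  have cb: "\<bar>(Q n * inverse (Q (n + d))) $ t\<bar> \<le> K0 ^ d / \<rho> ^ t" for n d t
  proof -
    have "\<bar>(Q n * inverse (Q (n + d))) $ t\<bar> * \<rho> ^ t \<le> K0 ^ d"
      using nrm_coeff[of \<rho> t t "Q n * inverse (Q (n + d))"] chain[of t n d] \<rho>pos by linarith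
    then show ?thesis using \<rho>pos by (simp add: pos_le_divide_eq)
  qed
  have Jeq: "Q l = (\<Sum>k\<le>Suc l. fps_const (J l k) * (fps_X ^ (Suc l - k) * Q k))" for l
  proof -
    have "Q l = T (Suc l) ([:0, 1:] * p l)"
      unfolding T_x using T_deg[of "p l" l] deg by (simp add: Q_def)
    also have "\<dots> = T (Suc l) (\<Sum>k\<le>Suc l. smult (J l k) (p k))"
      using J_exp[of l] by (simp add: p_def)
    also have "\<dots> = (\<Sum>k\<le>Suc l. fps_const (J l k) * T (Suc l) (p k))" by (rule T_sum)
    also have "\<dots> = (\<Sum>k\<le>Suc l. fps_const (J l k) * (fps_X ^ (Suc l - k) * Q k))"
      by (intro sum.cong refl) (simp add: T_deg deg Q_def)
    finally show ?thesis .
  qed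
  have coef: "(Q l * inverse (Q (Suc l))) $ s = J l (Suc l - s)
      + (\<Sum>j<s. J l (Suc l - j) * (Q (Suc l - j) * inverse (Q (Suc l))) $ (s - j))"
    if s: "s \<le> Suc l" for l s
  proof -
    define m where "m = Suc l"
    define iQ where "iQ = inverse (Q m)"
    have "Q l * iQ = (\<Sum>k\<le>m. fps_const (J l k) * (fps_X ^ (m - k) * Q k)) * iQ"
      using Jeq[of l] unfolding m_def by (rule arg_cong[where f="\<lambda>x. x * iQ"])
    also have "\<dots> = (\<Sum>k\<le>m. fps_const (J l k) * (fps_X ^ (m - k) * (Q k * iQ)))"
      unfolding sum_distrib_right by (simp only: mult.assoc)
    finally have "Q l * iQ = (\<Sum>k\<le>m. fps_const (J l k) * (fps_X ^ (m - k) * (Q k * iQ)))" .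
    then have "(Q l * iQ) $ s = (\<Sum>k\<le>m. J l k * (if s < m - k then 0 else (Q k * iQ) $ (s - (m - k))))"
      by (simp add: fps_sum_nth fps_X_power_mult_nth)
    also have "\<dots> = (\<Sum>j\<le>m. J l (m - j) * (if s < j then 0 else (Q (m - j) * iQ) $ (s - j)))"
      by (subst sum_flip) (intro sum.cong refl, simp)
    also have "\<dots> = (\<Sum>j\<le>s. J l (m - j) * (if s < j then 0 else (Q (m - j) * iQ) $ (s - j)))"
      by (rule sum.mono_neutral_right) (use s in \<open>auto simp: m_def\<close>)
    also have "\<dots> = (\<Sum>j<s. J l (m - j) * (Q (m - j) * iQ) $ (s - j)) + J l (m - s) * (Q (m - s) * iQ) $ 0"
      unfolding lessThan_Suc_atMost[symmetric] sum.lessThan_Suc by simp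
    also have "(Q (m - s) * iQ) $ 0 = 1" by (simp add: iQ_def Q0)
    finally show ?thesis by (simp add: m_def iQ_def)
  qed
  have main: "\<exists>B\<ge>0. \<forall>l. s \<le> Suc l \<longrightarrow> \<bar>J l (Suc l - s)\<bar> \<le> B" for s
  proof (induction s rule: less_induct)
    case (less s)
    then have "\<forall>j. \<exists>B. j < s \<longrightarrow> (B \<ge> 0 \<and> (\<forall>l. j \<le> Suc l \<longrightarrow> \<bar>J l (Suc l - j)\<bar> \<le> B))"
      by blast
    then obtain Bf where Bf: "\<And>j. j < s \<Longrightarrow> Bf j \<ge> 0 \<and> (\<forall>l. j \<le> Suc l \<longrightarrow> \<bar>J l (Suc l - j)\<bar> \<le> Bf j)"
      by metis
    define B where "B = K0 / \<rho> ^ s + (\<Sum>j<s. Bf j * (K0 ^ j / \<rho> ^ (s - j)))"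
    have B0: "B \<ge> 0" unfolding B_def using Bf K0pos \<rho>pos
      by (intro add_nonneg_nonneg sum_nonneg mult_nonneg_nonneg divide_nonneg_nonneg) auto
    show ?case
    proof (intro exI[of _ B] conjI allI impI B0)
      fix l assume sl: "s \<le> Suc l"
      let ?G = "\<lambda>j. Q (Suc l - j) * inverse (Q (Suc l))"
      have "J l (Suc l - s) = (Q l * inverse (Q (Suc l))) $ s - (\<Sum>j<s. J l (Suc l - j) * ?G j $ (s - j))"
        using coef[OF sl] by simp
      then have "\<bar>J l (Suc l - s)\<bar> \<le> \<bar>(Q l * inverse (Q (Suc l))) $ s\<bar> + \<bar>\<Sum>j<s. J l (Suc l - j) * ?G j $ (s - j)\<bar>"
        by simp
      also have "\<dots> \<le> K0 / \<rho> ^ s + (\<Sum>j<s. Bf j * (K0 ^ j / \<rho> ^ (s - j)))"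
      proof (rule add_mono)
        show "\<bar>(Q l * inverse (Q (Suc l))) $ s\<bar> \<le> K0 / \<rho> ^ s"
          using cb[of l 1 s] by simp
        have "\<bar>\<Sum>j<s. J l (Suc l - j) * ?G j $ (s - j)\<bar> \<le> (\<Sum>j<s. \<bar>J l (Suc l - j) * ?G j $ (s - j)\<bar>)"
          by (rule sum_abs)
        also have "\<dots> \<le> (\<Sum>j<s. Bf j * (K0 ^ j / \<rho> ^ (s - j)))"
        proof (rule sum_mono)
          fix j assume j: "j \<in> {..<s}"
          have e: "Suc l - j + j = Suc l" using j sl by simp
          have g: "\<bar>?G j $ (s - j)\<bar> \<le> K0 ^ j / \<rho> ^ (s - j)"
            using cb[of "Suc l - j" j "s - j"] unfolding e .
          have "\<bar>J l (Suc l - j)\<bar> \<le> Bf j" using Bf[of j] j sl by auto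
          then show "\<bar>J l (Suc l - j) * ?G j $ (s - j)\<bar> \<le> Bf j * (K0 ^ j / \<rho> ^ (s - j))"
            unfolding abs_mult using g by (intro mult_mono) auto
        qed
        finally show "\<bar>\<Sum>j<s. J l (Suc l - j) * ?G j $ (s - j)\<bar> \<le> (\<Sum>j<s. Bf j * (K0 ^ j / \<rho> ^ (s - j)))" .
      qed
      finally show "\<bar>J l (Suc l - s)\<bar> \<le> B" unfolding B_def .
    qed
  qed
  then have "\<forall>s. \<exists>B. B \<ge> 0 \<and> (\<forall>l. s \<le> Suc l \<longrightarrow> \<bar>J l (Suc l - s)\<bar> \<le> B)" by blast
  then obtain Bf where Bf: "\<And>s. Bf s \<ge> 0 \<and> (\<forall>l. s \<le> Suc l \<longrightarrow> \<bar>J l (Suc l - s)\<bar> \<le> Bf s)"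
    by metis
  show ?thesis
  proof
    fix R :: nat
    show "bdd_above {\<bar>J l k\<bar> | l k. \<bar>int l - int k\<bar> \<le> int R}"
    proof (rule bdd_aboveI[where M="\<Sum>s\<le>Suc R. Bf s"])
      fix x assume "x \<in> {\<bar>J l k\<bar> | l k. \<bar>int l - int k\<bar> \<le> int R}"
      then obtain l k where x: "x = \<bar>J l k\<bar>" and lk: "\<bar>int l - int k\<bar> \<le> int R" by auto
      have sum0: "0 \<le> (\<Sum>s\<le>Suc R. Bf s)" using Bf by (intro sum_nonneg) auto
      show "x \<le> (\<Sum>s\<le>Suc R. Bf s)"
      proof (cases "k > Suc l")
        case True then show ?thesis using x J_zero sum0 by simp
      next
        case False
        define s where "s = Suc l - k"
        have sR: "s \<le> Suc R" using lk False unfolding s_def by linarith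
        have ks: "k = Suc l - s" "s \<le> Suc l" using False unfolding s_def by auto
        have "x \<le> Bf s" using Bf[of s] ks x by auto
        also have "\<dots> \<le> (\<Sum>s\<le>Suc R. Bf s)"
          by (rule member_le_sum) (use Bf sR in auto)
        finally show ?thesis .
      qed
    qed
  qed
qed

end
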